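(* Let $M$ be a real symmetric $n\times n$ matrix with exactly one positive eigenvalue and $n-1$ negative eigenvalues (and no zero eigenvalue), and write $\det(xI-M)=\sum_{k=0}^n a_kx^k$. (1) If $\mathrm{Trace}(M)=0$, then the sequence $|a_0|,|a_1|,\ldots,|a_{n-2}|$ is log-concave and unimodal. (2) If $\mathrm{Trace}(M)>0$, then the sequence $|a_0|,|a_1|,\ldots,|a_{n-1}|$ is log-concave and unimodal.
   Context: A sequence $a_0,\dots,a_m$ is unimodal if there is an index $k$ with $a_{j-1}\le a_j$ for $j\le k$ and $a_j\ge a_{j+1}$ for $j\ge k$; it is log-concave if $a_i^2\ge a_{i-1}a_{i+1}$ for $1\le i\le m-1$. *)

theory Defs
  imports "Jordan_Normal_Form.Char_Poly"
begin

definition mat_trace :: "'a :: comm_ring_1 mat \<Rightarrow> 'a" where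
  "mat_trace A = (\<Sum>i<dim_row A. A $$ (i, i))"

definition unimodal_seq :: "(nat \<Rightarrow> real) \<Rightarrow> nat \<Rightarrow> bool" where
  "unimodal_seq a m \<longleftrightarrow>
     (\<exists>k\<le>m. (\<forall>j. 1 \<le> j \<and> j \<le> k \<longrightarrow> a (j - 1) \<le> a j) \<and>
            (\<forall>j. k \<le> j \<and> j + 1 \<le> m \<longrightarrow> a j \<ge> a (j + 1)))"

definition log_concave_seq :: "(nat \<Rightarrow> real) \<Rightarrow> nat \<Rightarrow> bool" where
  "log_concave_seq a m \<longleftrightarrow>
     (\<forall>i. 1 \<le> i \<and> i + 1 \<le> m \<longrightarrow> a i ^ 2 \<ge> a (i - 1) * a (i + 1))"

definition num_eigenvalues :: "real mat \<Rightarrow> (real \<Rightarrow> bool) \<Rightarrow> nat" where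
  "num_eigenvalues A P = (\<Sum>k\<in>{k. eigenvalue A k \<and> P k}. order k (char_poly A))"

end

theory Submission
  imports Defs
begin

declare mult_pCons_left[simp del]



definition NR :: "real poly \<Rightarrow> nat" where
  "NR p = (\<Sum>x\<in>{x. poly p x = 0}. order x p)"

definition rr :: "real poly \<Rightarrow> bool" where
  "rr p \<longleftrightarrow> (\<exists>c rs. p = Polynomial.smult c (\<Prod>r\<leftarrow>rs. [:-r,1:]))"

lemma order_linear_if: "order x [:-r,1:] = (if x = r then 1 else (0::nat))"
proof (cases "x = r")
  case True then show ?thesis using order_power_n_n[of r 1] by simp
next
  case False
  then have "poly [:-r,1:] x \<noteq> 0" by simp
  then show ?thesis using False by (simp add: order_0I)
qed

lemma NR_linear_mult:
  assumes "s \<noteq> 0"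
  shows "NR ([:-r,1:] * s) = Suc (NR s)"
proof -
  have ne: "[:-r,1:] * s \<noteq> 0" using assms by (intro no_zero_divisors) simp_all
  have fin: "finite {x. poly s x = 0}" using poly_roots_finite[OF assms] .
  have roots: "{x. poly ([:-r,1:] * s) x = 0} = insert r {x. poly s x = 0}" by auto
  have "NR ([:-r,1:] * s) = (\<Sum>x\<in>insert r {x. poly s x = 0}. order x [:-r,1:] + order x s)"
    unfolding NR_def roots using order_mult[OF ne] by simp
  also have "\<dots> = (\<Sum>x\<in>insert r {x. poly s x = 0}. order x [:-r,1:]) + (\<Sum>x\<in>insert r {x. poly s x = 0}. order x s)"
    by (rule sum.distrib)
  also have "(\<Sum>x\<in>insert r {x. poly s x = 0}. order x [:-r,1:]) = 1"
    using fin by (simp add: order_linear_if sum.delta)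
  also have "(\<Sum>x\<in>insert r {x. poly s x = 0}. order x s) = NR s"
    unfolding NR_def using fin by (cases "poly s r = 0") (auto simp: insert_absorb order_0I)
  finally show ?thesis by simp
qed

lemma NR_smult: "c \<noteq> 0 \<Longrightarrow> NR (Polynomial.smult c p) = NR p"
  unfolding NR_def by (simp add: order_smult)

lemma prod_lin_props: "(\<Prod>r\<leftarrow>rs. [:-r,1:]) \<noteq> (0::real poly) \<and> NR (\<Prod>r\<leftarrow>rs. [:-r,1:]) = length rs
   \<and> degree (\<Prod>r\<leftarrow>rs. [:-r,1:]) = length rs"
proof (induction rs)
  case Nil
  then show ?case by (simp add: NR_def)
next
  case (Cons r rs)
  have "[:-r,1:] * (\<Prod>r\<leftarrow>rs. [:-r,1:]) \<noteq> 0" using Cons by (intro no_zero_divisors) simp_all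
  then show ?case using Cons by (simp del: mult_pCons_left add: NR_linear_mult degree_mult_eq)
qed

lemma rr_NR: assumes "rr p" "p \<noteq> 0" shows "NR p = degree p"
proof -
  obtain c rs where p: "p = Polynomial.smult c (\<Prod>r\<leftarrow>rs. [:-r,1:])" using assms(1) rr_def by auto
  with assms have "c \<noteq> 0" by auto
  then show ?thesis using p prod_lin_props[of rs] by (simp add: NR_smult)
qed

lemma root_split:
  fixes p :: "real poly"
  assumes "p \<noteq> 0" "poly p r = 0"
  obtains s where "p = [:-r,1:] * s" "s \<noteq> 0" "degree s = degree p - 1" "NR s = NR p - 1"
proof -
  have "[:-r,1:] dvd p" using assms by (simp add: dvd_iff_poly_eq_0)
  then obtain s where s: "p = [:-r,1:] * s" by (elim dvdE)
  then have "s \<noteq> 0" using assms by auto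
  moreover have "degree s = degree p - 1" using s \<open>s \<noteq> 0\<close> by (simp add: degree_mult_eq)
  moreover have "NR s = NR p - 1" using s NR_linear_mult[OF \<open>s \<noteq> 0\<close>, of r] by simp
  ultimately show ?thesis using s that by blast
qed

lemma NR_le: "p \<noteq> 0 \<Longrightarrow> NR p \<le> degree p"
proof (induction "degree p" arbitrary: p)
  case 0
  then show ?case 
  proof (cases "\<exists>r. poly p r = 0")
    case True
    then obtain r where "poly p r = 0" by auto
    then obtain s where "p = [:-r,1:] * s" "s \<noteq> 0" using root_split 0 by metis
    then have "degree p \<ge> 1" by (simp add: degree_mult_eq)
    then show ?thesis using 0 by simp
  next
    case False
    then show ?thesis by (simp add: NR_def)
  qed
next
  case (Suc d)
  show ?case
  proof (cases "\<exists>r. poly p r = 0")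
    case True
    then obtain r where "poly p r = 0" by auto
    then obtain s where s: "p = [:-r,1:] * s" "s \<noteq> 0" "degree s = degree p - 1" "NR s = NR p - 1"
      using root_split Suc by metis
    have "NR s \<le> degree s" using Suc.hyps(1)[of s] Suc.hyps(2) s by simp
    moreover have "NR p = Suc (NR s)" using s NR_linear_mult by simp
    ultimately show ?thesis using s Suc.hyps(2) by simp
  next
    case False
    then show ?thesis by (simp add: NR_def)
  qed
qed

lemma NR_rr: "p \<noteq> 0 \<Longrightarrow> NR p = degree p \<Longrightarrow> rr p"
proof (induction "degree p" arbitrary: p)
  case 0
  then have "p = [:coeff p 0:]" by (metis degree_0_id)
  then have "p = Polynomial.smult (coeff p 0) (\<Prod>r\<leftarrow>[]. [:-r,1:])" by simp
  then show ?case unfolding rr_def by blast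
next
  case (Suc d)
  then have "{x. poly p x = 0} \<noteq> {}" unfolding NR_def by (metis sum.empty nat.distinct(1))
  then obtain r where "poly p r = 0" by auto
  then obtain s where s: "p = [:-r,1:] * s" "s \<noteq> 0" "degree s = degree p - 1" "NR s = NR p - 1"
    using root_split Suc by metis
  then have "rr s" using Suc by simp
  then obtain c rs where "s = Polynomial.smult c (\<Prod>r\<leftarrow>rs. [:-r,1:])" unfolding rr_def by auto
  then have "p = Polynomial.smult c (\<Prod>r\<leftarrow>r#rs. [:-r,1:])" using s by simp
  then show ?case unfolding rr_def by blast
qed



lemma poly_rolle:
  fixes p :: "real poly"
  assumes "a < b" "poly p a = 0" "poly p b = 0"
  shows "\<exists>z. a < z \<and> z < b \<and> poly (pderiv p) z = 0"
proof -
  have "\<exists>z. a < z \<and> z < b \<and> DERIV (poly p) z :> 0"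
  proof (rule Rolle)
    show "continuous_on {a..b} (poly p)" by (auto intro: continuous_intros)
    show "\<And>x. poly p differentiable (at x)" unfolding real_differentiable_def using poly_DERIV by blast
  qed (use assms in auto)
  then obtain z where "a < z" "z < b" "DERIV (poly p) z :> 0" by auto
  moreover have "DERIV (poly p) z :> poly (pderiv p) z" by (rule poly_DERIV)
  ultimately show ?thesis using DERIV_unique by blast
qed

lemma sum_order_mono:
  fixes q :: "real poly"
  assumes "q \<noteq> 0" "finite T" "T \<subseteq> {..c}"
  shows "(\<Sum>x\<in>T. order x q) \<le> (\<Sum>x\<in>{x. poly q x = 0 \<and> x \<le> c}. order x q)"
proof -
  have fin: "finite {x. poly q x = 0 \<and> x \<le> c}"
    using poly_roots_finite[OF assms(1)] by (rule finite_subset[rotated]) auto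
  have "(\<Sum>x\<in>T. order x q) = (\<Sum>x\<in>T \<inter> {x. poly q x = 0}. order x q)"
    by (rule sum.mono_neutral_right) (use assms in \<open>auto simp: order_0I order_gt_0_iff[OF assms(1)]\<close>)
  also have "\<dots> \<le> (\<Sum>x\<in>{x. poly q x = 0 \<and> x \<le> c}. order x q)"
    by (rule sum_mono2[OF fin]) (use assms in auto)
  finally show ?thesis .
qed

lemma rolle_count:
  fixes p :: "real poly"
  assumes p: "p \<noteq> 0" and dp: "pderiv p \<noteq> 0" and fin: "finite S"
  shows "S \<noteq> {} \<longrightarrow> S \<subseteq> {x. poly p x = 0} \<longrightarrow>
    (\<Sum>x\<in>S. order x p) \<le> Suc (\<Sum>x\<in>{x. poly (pderiv p) x = 0 \<and> x \<le> Max S}. order x (pderiv p))"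
  using fin
proof (induction S rule: finite_linorder_max_induct)
  case empty
  then show ?case by simp
next
  case (insert b A)
  show ?case
  proof (intro impI)
    assume "insert b A \<noteq> {}" and rts: "insert b A \<subseteq> {x. poly p x = 0}"
    let ?D = "\<lambda>c. {x. poly (pderiv p) x = 0 \<and> x \<le> c}"
    have Mx: "Max (insert b A) = b"
    proof (rule Max_eqI)
      show "finite (insert b A)" using insert by simp
      show "\<And>y. y \<in> insert b A \<Longrightarrow> y \<le> b" using insert by (auto intro: less_imp_le)
    qed simp
    have ob: "order b p = Suc (order b (pderiv p))" using rts p order_pderiv[OF p, of b] by simp
    have bnot: "b \<notin> A" using insert by auto
    show "(\<Sum>x\<in>insert b A. order x p) \<le> Suc (\<Sum>x\<in>?D (Max (insert b A)). order x (pderiv p))"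
    proof (cases "A = {}")
      case True
      have "order b (pderiv p) \<le> (\<Sum>x\<in>?D b. order x (pderiv p))"
        using sum_order_mono[OF dp, of "{b}" b] by simp
      then show ?thesis using True Mx ob by simp
    next
      case False
      define a where "a = Max A"
      have aA: "a \<in> A" using False insert a_def by simp
      have ab: "a < b" using aA insert by auto
      have IH: "(\<Sum>x\<in>A. order x p) \<le> Suc (\<Sum>x\<in>?D a. order x (pderiv p))"
        using insert.IH False rts a_def by auto
      obtain z where z: "a < z" "z < b" "poly (pderiv p) z = 0"
        using poly_rolle[OF ab] rts aA by auto
      have oz: "order z (pderiv p) \<ge> 1" using z order_gt_0_iff[OF dp, of z] by simp
      have finD: "finite (?D a)"
        using poly_roots_finite[OF dp] by (rule finite_subset[rotated]) auto
      have "(\<Sum>x\<in>insert z (insert b (?D a)). order x (pderiv p)) \<le> (\<Sum>x\<in>?D b. order x (pderiv p))"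
        by (rule sum_order_mono[OF dp]) (use finD z ab in auto)
      moreover have "(\<Sum>x\<in>insert z (insert b (?D a)). order x (pderiv p))
          = order z (pderiv p) + order b (pderiv p) + (\<Sum>x\<in>?D a. order x (pderiv p))"
        using finD z ab by simp
      moreover have "(\<Sum>x\<in>insert b A. order x p) = order b p + (\<Sum>x\<in>A. order x p)"
        using insert bnot by simp
      ultimately show ?thesis unfolding Mx using IH ob oz by linarith
    qed
  qed
qed

lemma NR_pderiv:
  fixes p :: "real poly"
  assumes "p \<noteq> 0" "degree p \<ge> 1" "NR p = degree p"
  shows "NR (pderiv p) = degree (pderiv p)"
proof -
  have dp: "pderiv p \<noteq> 0" using assms by (simp add: pderiv_eq_0_iff)
  let ?S = "{x. poly p x = 0}"
  have fin: "finite ?S" using poly_roots_finite[OF assms(1)] .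
  have ne: "?S \<noteq> {}" using assms unfolding NR_def by (metis sum.empty not_one_le_zero)
  have "NR p \<le> Suc (\<Sum>x\<in>{x. poly (pderiv p) x = 0 \<and> x \<le> Max ?S}. order x (pderiv p))"
    using rolle_count[OF assms(1) dp fin] ne unfolding NR_def by auto
  also have "(\<Sum>x\<in>{x. poly (pderiv p) x = 0 \<and> x \<le> Max ?S}. order x (pderiv p)) \<le> NR (pderiv p)"
    unfolding NR_def by (rule sum_mono2[OF poly_roots_finite[OF dp]]) auto
  finally have "degree p \<le> Suc (NR (pderiv p))" using assms by simp
  then have "degree (pderiv p) \<le> NR (pderiv p)" by (simp add: degree_pderiv)
  then show ?thesis using NR_le[OF dp] by simp
qed

lemma rr_pderiv: assumes "rr p" shows "rr (pderiv p)"
proof (cases "degree p = 0")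
  case True
  then have "pderiv p = Polynomial.smult 0 (\<Prod>r\<leftarrow>[]. [:-r,1:])" by (simp add: pderiv_eq_0_iff)
  then show ?thesis unfolding rr_def by blast
next
  case False
  then have "p \<noteq> 0" by auto
  then have "NR p = degree p" using rr_NR assms by simp
  then have "NR (pderiv p) = degree (pderiv p)" using NR_pderiv False \<open>p \<noteq> 0\<close> by simp
  moreover have "pderiv p \<noteq> 0" using False by (simp add: pderiv_eq_0_iff)
  ultimately show ?thesis using NR_rr by simp
qed

lemma rr_funpow: "rr p \<Longrightarrow> rr ((pderiv ^^ j) p)"
  by (induction j) (auto intro: rr_pderiv)



lemma coeff_funpow_pderiv:
  fixes p :: "real poly"
  shows "coeff ((pderiv ^^ j) p) i = fact (i + j) / fact i * coeff p (i + j)"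
proof (induction j arbitrary: i)
  case 0 then show ?case by simp
next
  case (Suc j)
  have "coeff ((pderiv ^^ Suc j) p) i = real (Suc i) * coeff ((pderiv ^^ j) p) (Suc i)"
    by (simp add: coeff_pderiv)
  also have "\<dots> = real (Suc i) * (fact (Suc i + j) / fact (Suc i) * coeff p (Suc i + j))"
    using Suc by simp
  also have "\<dots> = fact (i + Suc j) / fact i * coeff p (i + Suc j)"
  proof -
    have e: "Suc i + j = i + Suc j" by simp
    have f: "(fact (Suc i)::real) = real (Suc i) * fact i" by simp
    have g: "real (Suc i) \<noteq> 0" by simp
    show ?thesis unfolding e f using g by (simp del: of_nat_Suc fact_Suc)
  qed
  finally show ?case .
qed

lemma coeff_lin_mult:
  fixes S :: "real poly"
  shows "coeff ([:a,1:] * S) 0 = a * coeff S 0"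
    and "coeff ([:a,1:] * S) (Suc k) = a * coeff S (Suc k) + coeff S k"
  by (simp_all add: mult_pCons_left)

lemma quad_step:
  fixes r s0 s1 s2 :: real
  assumes "r^2*(2*s0*s2) \<le> r^2*s1^2"
  shows "2*(-r*s0)*(-r*s2+s1) \<le> (-r*s1+s0)^2"
proof -
  have "(-r*s1+s0)^2 - 2*(-r*s0)*(-r*s2+s1) = s0^2 + (r^2*s1^2 - r^2*(2*s0*s2))"
    by (simp add: power2_eq_square algebra_simps)
  moreover have "0 \<le> s0^2" by simp
  ultimately show ?thesis using assms by linarith
qed

lemma quad_prod: "2 * coeff (\<Prod>r\<leftarrow>rs. [:-r,1:]) 0 * coeff (\<Prod>r\<leftarrow>rs. [:-r,1:]) 2
   \<le> (coeff (\<Prod>r\<leftarrow>rs. [:-r,1:]) 1 :: real)^2"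
proof (induction rs)
  case Nil then show ?case by simp
next
  case (Cons r rs)
  let ?S = "\<Prod>r\<leftarrow>rs. [:-r,1:]"
  have e: "(\<Prod>r\<leftarrow>r#rs. [:-r,1:]) = [:-r,1:] * ?S" by simp
  have c2: "coeff ([:-r,1:] * ?S) 2 = -r * coeff ?S 2 + coeff ?S 1"
    using coeff_lin_mult(2)[of "-r" ?S 1] by (simp add: numeral_2_eq_2)
  have c1: "coeff ([:-r,1:] * ?S) 1 = -r * coeff ?S 1 + coeff ?S 0"
    using coeff_lin_mult(2)[of "-r" ?S 0] by simp
  have c0: "coeff ([:-r,1:] * ?S) 0 = -r * coeff ?S 0"
    using coeff_lin_mult(1)[of "-r" ?S] by simp
  have h: "r^2 * (2 * coeff ?S 0 * coeff ?S 2) \<le> r^2 * (coeff ?S 1)^2"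
    using Cons by (intro mult_left_mono) auto
  show ?case unfolding e c0 c1 c2 by (rule quad_step[OF h])
qed

lemma quad_rr: "rr R \<Longrightarrow> 2 * coeff R 0 * coeff R 2 \<le> (coeff R 1)^2"
proof -
  assume "rr R"
  then obtain c rs where R: "R = Polynomial.smult c (\<Prod>r\<leftarrow>rs. [:-r,1:])" unfolding rr_def by auto
  have "c^2 * (2 * coeff (\<Prod>r\<leftarrow>rs. [:-r,1:]) 0 * coeff (\<Prod>r\<leftarrow>rs. [:-r,1:]) 2)
     \<le> c^2 * (coeff (\<Prod>r\<leftarrow>rs. [:-r,1:]) 1)^2"
    using quad_prod[of rs] by (intro mult_left_mono) auto
  then show ?thesis unfolding R by (simp add: power2_eq_square algebra_simps)
qed

lemma newton:
  fixes p :: "real poly"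
  assumes "rr p"
  shows "real (Suc (Suc j)) * coeff p j * coeff p (Suc (Suc j)) \<le> real (Suc j) * (coeff p (Suc j))^2"
proof -
  let ?R = "(pderiv ^^ j) p"
  have "2 * coeff ?R 0 * coeff ?R 2 \<le> (coeff ?R 1)^2" using quad_rr rr_funpow assms by blast
  then have "2 * (fact j * coeff p j) * (fact (Suc (Suc j)) / 2 * coeff p (Suc (Suc j)))
      \<le> (fact (Suc j) * coeff p (Suc j))^2"
    unfolding coeff_funpow_pderiv by (simp add: numeral_2_eq_2)
  then have "fact j * fact j * (real (Suc j) * (real (Suc (Suc j)) * coeff p j * coeff p (Suc (Suc j))))
      \<le> fact j * fact j * (real (Suc j) * (real (Suc j) * (coeff p (Suc j))^2))"
    by (simp add: power2_eq_square algebra_simps)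
  then have "real (Suc j) * (real (Suc (Suc j)) * coeff p j * coeff p (Suc (Suc j)))
      \<le> real (Suc j) * (real (Suc j) * (coeff p (Suc j))^2)"
    by (rule mult_left_le_imp_le) simp
  then show ?thesis by (rule mult_left_le_imp_le) simp
qed



lemma prod_lin_monic:
  fixes f :: "nat \<Rightarrow> real"
  shows "coeff (\<Prod>i\<in>{0..<n}. [:-f i,1:]) n = 1 \<and> (\<forall>k>n. coeff (\<Prod>i\<in>{0..<n}. [:-f i,1:]) k = 0)"
proof (induction n)
  case 0 then show ?case by auto
next
  case (Suc n)
  let ?Q = "\<Prod>i\<in>{0..<n}. [:-f i,1:]"
  have e: "(\<Prod>i\<in>{0..<Suc n}. [:-f i,1:]) = [:-f n,1:] * ?Q" by (simp add: prod.atLeast0_lessThan_Suc mult.commute)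
  have "coeff ([:-f n,1:] * ?Q) (Suc n) = 1" using Suc by (simp add: coeff_lin_mult)
  moreover have "\<forall>k>Suc n. coeff ([:-f n,1:] * ?Q) k = 0"
  proof (intro allI impI)
    fix k assume "k > Suc n"
    then obtain k' where "k = Suc k'" "k' > n" by (cases k) auto
    then show "coeff ([:-f n,1:] * ?Q) k = 0" using Suc by (simp add: coeff_lin_mult)
  qed
  ultimately show ?case unfolding e by simp
qed

lemma prod_lin_coeff:
  fixes f :: "nat \<Rightarrow> real"
  shows "coeff (\<Prod>i\<in>{0..<Suc n}. [:-f i,1:]) n = - (\<Sum>i\<in>{0..<Suc n}. f i)"
proof (induction n)
  case 0 then show ?case by (simp add: coeff_lin_mult)
next
  case (Suc n)
  let ?Q = "\<Prod>i\<in>{0..<Suc n}. [:-f i,1:]"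
  have e: "(\<Prod>i\<in>{0..<Suc (Suc n)}. [:-f i,1:]) = [:-f (Suc n),1:] * ?Q"
    by (simp only: prod.atLeast0_lessThan_Suc[of _ "Suc n"] mult.commute)
  have "coeff ?Q (Suc n) = 1" using prod_lin_monic by blast
  then show ?case unfolding e using Suc by (simp add: coeff_lin_mult)
qed

lemma char_poly_matrix_entry:
  assumes "M \<in> carrier_mat n n" "i < n" "j < n"
  shows "char_poly_matrix M $$ (i,j) = (if i = j then [:-M$$(i,i),1:] else [:-M$$(i,j):])"
  using assms by (auto simp: char_poly_matrix_def)

lemma char_poly_trace:
  fixes M :: "real mat"
  assumes M: "M \<in> carrier_mat n n" and n: "n \<ge> 1"
  shows "coeff (char_poly M) (n - 1) = - mat_trace M"
proof -
  let ?A = "char_poly_matrix M"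
  let ?P = "{p. p permutes {0..<n}}"
  let ?t = "\<lambda>p. signof p * (\<Prod>i = 0..<n. ?A $$ (i, p i))"
  have cp: "char_poly M = (\<Sum>p\<in>?P. ?t p)"
    unfolding char_poly_def by (rule det_def') (use M in simp)
  have fin: "finite ?P" by (simp add: finite_permutations)
  have idP: "id \<in> ?P" by (simp add: permutes_id)
  have zero: "coeff (?t p) (n - 1) = 0" if p: "p \<in> ?P - {id}" for p
  proof -
    from p have pp: "p permutes {0..<n}" "p \<noteq> id" by auto
    then obtain i0 where i0: "i0 < n" "p i0 \<noteq> i0"
      by (metis atLeastLessThan_iff order_refl permutes_natset_le)
    have pi0: "p i0 < n" using pp(1) i0(1) by (simp add: permutes_in_image)
    have ppi0: "p (p i0) \<noteq> p i0" using i0(2) pp(1) by (metis permutes_inj injD)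
    let ?g = "\<lambda>x. if x = i0 \<or> x = p i0 then 0 else (1::nat)"
    have "degree (\<Prod>i = 0..<n. ?A $$ (i, p i)) \<le> (\<Sum>i\<in>{0..<n}. degree (?A $$ (i, p i)))"
      using degree_prod_sum_le[of "{0..<n}" "\<lambda>i. ?A $$ (i, p i)"] by (simp add: o_def)
    also have "\<dots> \<le> (\<Sum>i\<in>{0..<n}. ?g i)"
    proof (rule sum_mono)
      fix i assume i: "i \<in> {0..<n}"
      then have pi: "p i < n" using pp(1) by (simp add: permutes_in_image)
      show "degree (?A $$ (i, p i)) \<le> ?g i"
        using i pi i0 ppi0 by (auto simp: char_poly_matrix_entry[OF M])
    qed
    also have "(\<Sum>i\<in>{0..<n}. ?g i) = card ({0..<n} - {i0, p i0})"
    proof -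
      have "(\<Sum>i\<in>{0..<n}. ?g i) = (\<Sum>i\<in>{0..<n} - {i0, p i0}. 1)"
        by (rule sum.mono_neutral_cong_right) auto
      then show ?thesis by simp
    qed
    also have "\<dots> = n - 2" using i0 pi0 by (simp add: card_Diff_subset)
    finally have dg: "degree (\<Prod>i = 0..<n. ?A $$ (i, p i)) < n - 1" using i0 pi0 n by linarith
    then have "degree (?t p) < n - 1" by simp
    then show ?thesis by (simp add: coeff_eq_0)
  qed
  have "coeff (char_poly M) (n - 1) = (\<Sum>p\<in>?P. coeff (?t p) (n - 1))"
    unfolding cp by (simp add: coeff_sum)
  also have "\<dots> = coeff (?t id) (n - 1) + (\<Sum>p\<in>?P - {id}. coeff (?t p) (n - 1))"
    by (rule sum.remove[OF fin idP])
  also have "(\<Sum>p\<in>?P - {id}. coeff (?t p) (n - 1)) = 0" using zero by simp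
  also have "?t id = (\<Prod>i\<in>{0..<n}. [:-M$$(i,i),1:])"
  proof -
    have "(\<Prod>i = 0..<n. ?A $$ (i, i)) = (\<Prod>i\<in>{0..<n}. [:-M$$(i,i),1:])"
      by (rule prod.cong) (auto simp: char_poly_matrix_entry[OF M])
    then show ?thesis by (simp add: signof_id)
  qed
  also have "coeff (\<Prod>i\<in>{0..<n}. [:-M$$(i,i),1:]) (n - 1) = - (\<Sum>i\<in>{0..<n}. M$$(i,i))"
    using prod_lin_coeff[of "\<lambda>i. M$$(i,i)" "n - 1"] n by simp
  finally show ?thesis using M by (simp add: mat_trace_def atLeast0LessThan)
qed



lemma chain_less:
  fixes f :: "nat \<Rightarrow> real"
  assumes "\<And>j. j < N \<Longrightarrow> f j < f (Suc j)"
  shows "k < N \<Longrightarrow> f k < f N"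
  using assms
proof (induction N)
  case 0 then show ?case by simp
next
  case (Suc N)
  show ?case
  proof (cases "k = N")
    case True then show ?thesis using Suc.prems by simp
  next
    case False
    then have "f k < f N" using Suc by simp
    also have "f N < f (Suc N)" using Suc.prems by simp
    finally show ?thesis .
  qed
qed

lemma lc_unimodal:
  fixes b :: "nat \<Rightarrow> real"
  assumes pos: "\<And>k. k \<le> L \<Longrightarrow> b k > 0" and lc: "log_concave_seq b L"
  shows "unimodal_seq b L"
proof -
  have down: "b (j - d) < b (j - d + 1)" if "j + 1 \<le> L" "b j < b (j + 1)" "d \<le> j" for j d
    using that(3)
  proof (induction d)
    case 0 then show ?case using that by simp
  next
    case (Suc d)
    define i where "i = j - Suc d"
    have ii: "j - d = i + 1" using Suc.prems i_def by simp
    have h: "b (i+1) < b (i+2)" using Suc ii by simp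
    have l: "b i * b (i + 2) \<le> b (i+1) ^ 2"
    proof -
      have "1 \<le> i+1 \<and> i+1+1 \<le> L" using that(1) Suc.prems ii by linarith
      then have "b (i+1) ^ 2 \<ge> b (i+1-1) * b (i+1+1)" using lc unfolding log_concave_seq_def by blast
      then show ?thesis by (simp add: numeral_2_eq_2)
    qed
    have bi: "b i > 0" using pos that Suc.prems i_def by simp
    have bi1: "b (i+1) > 0" using pos that Suc.prems ii by simp
    have "b i * b (i+1) < b i * b (i+2)" using h bi by simp
    also have "\<dots> \<le> b (i+1) * b (i+1)" using l by (simp add: power2_eq_square)
    finally have "b i < b (i+1)" using bi1 by (simp add: mult_less_cancel_right)
    then show ?case using ii i_def by simp
  qed
  define S where "S = {k. k \<le> L \<and> (\<forall>j. 1 \<le> j \<and> j \<le> k \<longrightarrow> b (j - 1) \<le> b j)}"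
  have finS: "finite S" unfolding S_def by (rule finite_subset[of _ "{..L}"]) auto
  have S0: "0 \<in> S" unfolding S_def by auto
  define K where "K = Max S"
  have KS: "K \<in> S" using finS S0 K_def by (metis Max_in empty_iff)
  have Kmax: "k \<in> S \<Longrightarrow> k \<le> K" for k using finS K_def by simp
  show ?thesis unfolding unimodal_seq_def
  proof (intro exI[of _ K] conjI allI impI)
    show "K \<le> L" using KS S_def by simp
    show "b (j - 1) \<le> b j" if "1 \<le> j \<and> j \<le> K" for j using KS that S_def by simp
    show "b j \<ge> b (j + 1)" if j: "K \<le> j \<and> j + 1 \<le> L" for j
    proof (rule ccontr)
      assume "\<not> b j \<ge> b (j + 1)"
      then have lt: "b j < b (j + 1)" by simp
      have "j + 1 \<in> S" unfolding S_def
      proof (intro CollectI conjI allI impI)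
        show "j + 1 \<le> L" using j by simp
        fix i assume "1 \<le> i \<and> i \<le> j + 1"
        then have "j + 1 - i \<le> j" by linarith
        then have "b (j - (j + 1 - i)) < b (j - (j + 1 - i) + 1)" using down[OF _ lt, of "j + 1 - i"] j by blast
        moreover have "j - (j + 1 - i) = i - 1" using \<open>1 \<le> i \<and> i \<le> j + 1\<close> by simp
        ultimately show "b (i - 1) \<le> b i" using \<open>1 \<le> i \<and> i \<le> j + 1\<close> by simp
      qed
      then show False using Kmax j by fastforce
    qed
  qed
qed



lemma finish:
  fixes P :: "real poly"
  assumes rrP: "rr P" and neg: "\<And>k. k \<le> L \<Longrightarrow> coeff P k < 0"
  shows "log_concave_seq (\<lambda>k. \<bar>coeff P k\<bar>) L \<and> unimodal_seq (\<lambda>k. \<bar>coeff P k\<bar>) L"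
proof -
  have lc: "log_concave_seq (\<lambda>k. \<bar>coeff P k\<bar>) L"
    unfolding log_concave_seq_def
  proof (intro allI impI)
    fix i assume i: "1 \<le> i \<and> i + 1 \<le> L"
    then obtain j where j: "i = Suc j" by (cases i) auto
    have nw: "real (Suc (Suc j)) * coeff P j * coeff P (Suc (Suc j)) \<le> real (Suc j) * (coeff P (Suc j))^2"
      using newton[OF rrP] .
    have n1: "coeff P j < 0" using neg i j by simp
    have n2: "coeff P (Suc (Suc j)) < 0" using neg i j by simp
    have pp: "coeff P j * coeff P (Suc (Suc j)) > 0" using n1 n2 by (simp add: mult_neg_neg)
    have "real (Suc j) * (coeff P j * coeff P (Suc (Suc j))) \<le> real (Suc (Suc j)) * (coeff P j * coeff P (Suc (Suc j)))"
      using pp by (intro mult_right_mono) auto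
    also have "\<dots> \<le> real (Suc j) * (coeff P (Suc j))^2" using nw by (simp add: mult.assoc)
    finally have "coeff P j * coeff P (Suc (Suc j)) \<le> (coeff P (Suc j))^2"
      by (rule mult_left_le_imp_le) simp
    moreover have "\<bar>coeff P j\<bar> * \<bar>coeff P (Suc (Suc j))\<bar> = coeff P j * coeff P (Suc (Suc j))"
      using n1 n2 by simp
    ultimately show "\<bar>coeff P (i - 1)\<bar> * \<bar>coeff P (i + 1)\<bar> \<le> \<bar>coeff P i\<bar>^2"
      using j by simp
  qed
  moreover have "unimodal_seq (\<lambda>k. \<bar>coeff P k\<bar>) L"
    by (rule lc_unimodal[OF _ lc]) (use neg in force)
  ultimately show ?thesis by simp
qed

lemma pos_prod_coeffs:
  assumes "\<forall>r\<in>set rs. r < (0::real)"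
  shows "(\<forall>k. coeff (\<Prod>r\<leftarrow>rs. [:-r,1:]) k \<ge> 0) \<and> (\<forall>k \<le> length rs. coeff (\<Prod>r\<leftarrow>rs. [:-r,1:]) k > 0)"
  using assms
proof (induction rs)
  case Nil
  then show ?case by auto
next
  case (Cons r rs)
  let ?S = "\<Prod>r\<leftarrow>rs. [:-r,1:]"
  have e: "(\<Prod>r\<leftarrow>r#rs. [:-r,1:]) = [:-r,1:] * ?S" by simp
  have r: "r < 0" and IH: "(\<forall>k. coeff ?S k \<ge> 0) \<and> (\<forall>k \<le> length rs. coeff ?S k > 0)" using Cons by auto
  have ge: "coeff ([:-r,1:] * ?S) k \<ge> 0" for k
  proof (cases k)
    case 0 then show ?thesis using r IH by (simp add: coeff_lin_mult mult_nonpos_nonneg)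
  next
    case (Suc k')
    have "r * coeff ?S (Suc k') \<le> 0" using r IH by (simp add: mult_nonpos_nonneg)
    moreover have "coeff ?S k' \<ge> 0" using IH by simp
    ultimately show ?thesis using Suc by (simp add: coeff_lin_mult)
  qed
  have gt: "coeff ([:-r,1:] * ?S) k > 0" if "k \<le> Suc (length rs)" for k
  proof (cases k)
    case 0 then show ?thesis using r IH by (simp add: coeff_lin_mult mult_neg_pos)
  next
    case (Suc k')
    then have "coeff ?S k' > 0" using IH that by simp
    moreover have "-r * coeff ?S (Suc k') \<ge> 0" using r IH mult_nonpos_nonneg[of r "coeff ?S (Suc k')"] by auto
    ultimately show ?thesis using Suc by (simp add: coeff_lin_mult)
  qed
  show ?case unfolding e using ge gt by simp
qed

lemma prod_lin_root: "r \<in> set rs \<Longrightarrow> poly (\<Prod>r\<leftarrow>rs. [:-r,1:]) r = (0::real)"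
  by (induction rs) auto

lemma frac_less: "(0::real) < y \<Longrightarrow> 0 < w \<Longrightarrow> x * w < z * y \<Longrightarrow> x / y < z / w"
  by (simp add: field_simps)



theorem corollary2p3:
  fixes M :: "real mat" and n :: nat
  assumes "M \<in> carrier_mat n n"
    and "transpose_mat M = M"
    and "num_eigenvalues M (\<lambda>x. x > 0) = 1"
    and "num_eigenvalues M (\<lambda>x. x < 0) = n - 1"
    and "\<not> eigenvalue M 0"
  shows "(mat_trace M = 0 \<longrightarrow>
            log_concave_seq (\<lambda>k. \<bar>coeff (char_poly M) k\<bar>) (n - 2) \<and>
            unimodal_seq (\<lambda>k. \<bar>coeff (char_poly M) k\<bar>) (n - 2))
       \<and> (mat_trace M > 0 \<longrightarrow>
            log_concave_seq (\<lambda>k. \<bar>coeff (char_poly M) k\<bar>) (n - 1) \<and>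
            unimodal_seq (\<lambda>k. \<bar>coeff (char_poly M) k\<bar>) (n - 1))"
proof -
  note Mc = assms(1)
  define P where "P = char_poly M"
  have dP: "degree P = n" and lP: "coeff P n = 1" using degree_monic_char_poly[OF Mc] P_def by auto
  have P0: "P \<noteq> 0" using lP by auto
  have eig: "eigenvalue M k \<longleftrightarrow> poly P k = 0" for k using eigenvalue_root_char_poly[OF Mc] P_def by simp
  define Pos where "Pos = {x. poly P x = 0 \<and> x > 0}"
  define Neg where "Neg = {x. poly P x = 0 \<and> x < 0}"
  have finR: "finite {x. poly P x = 0}" using poly_roots_finite[OF P0] .
  have finPos: "finite Pos" unfolding Pos_def by (rule finite_subset[OF _ finR]) auto
  have finNeg: "finite Neg" unfolding Neg_def by (rule finite_subset[OF _ finR]) auto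
  have sPos: "(\<Sum>x\<in>Pos. order x P) = 1"
    using assms(3) unfolding num_eigenvalues_def eig Pos_def P_def by simp
  have sNeg: "(\<Sum>x\<in>Neg. order x P) = n - 1"
    using assms(4) unfolding num_eigenvalues_def eig Neg_def P_def by simp
  have nz: "poly P 0 \<noteq> 0" using assms(5) eig by simp
  have roots: "{x. poly P x = 0} = Pos \<union> Neg"
  proof -
    have "x \<noteq> 0" if "poly P x = 0" for x using that nz by auto
    then show ?thesis unfolding Pos_def Neg_def by force
  qed
  have NRP0: "NR P = 1 + (n - 1)"
    unfolding NR_def roots using finPos finNeg sPos sNeg
    by (subst sum.union_disjoint) (auto simp: Pos_def Neg_def)
  have "Pos \<noteq> {}" using sPos by auto
  then obtain p where pP: "p \<in> Pos" by auto
  have pp: "p > 0" "poly P p = 0" using pP Pos_def by auto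
  have ordpos: "order x P \<ge> 1" if "x \<in> Pos" for x
    using that order_gt_0_iff[OF P0, of x] Pos_def by auto
  have uniq: "x = p" if "x \<in> Pos" for x
  proof (rule ccontr)
    assume "x \<noteq> p"
    then have "(\<Sum>y\<in>{p, x}. order y P) = order p P + order x P" by simp
    also have "\<dots> \<ge> 2" using ordpos[OF pP] ordpos[OF that] by simp
    moreover have "(\<Sum>y\<in>{p, x}. order y P) \<le> (\<Sum>y\<in>Pos. order y P)"
      by (rule sum_mono2[OF finPos]) (use pP that in auto)
    ultimately show False using sPos by simp
  qed
  have ordp: "order p P = 1"
    using member_le_sum[OF pP, of "\<lambda>x. order x P"] finPos sPos ordpos[OF pP] by simp
  obtain Q where Q: "P = [:-p,1:] * Q" "Q \<noteq> 0" "degree Q = degree P - 1" "NR Q = NR P - 1"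
    using root_split[OF P0 pp(2)] by blast
  have dPQ: "degree P = Suc (degree Q)" using Q by (simp add: degree_mult_eq)
  then have n1: "n \<ge> 1" using dP by simp
  have NRP: "NR P = n" using NRP0 n1 by simp
  have rrP: "rr P" using NR_rr[OF P0] NRP dP by simp
  define m where "m = n - 1"
  have nm: "n = Suc m" using n1 m_def by simp
  have dQ: "degree Q = m" using dPQ dP nm by simp
  have rrQ: "rr Q" using NR_rr[OF Q(2)] Q(4) NRP dQ m_def by simp
  have "order p P = order p [:-p,1:] + order p Q" using order_mult[of "[:-p,1:]" Q p] P0 Q(1) by simp
  then have "order p Q = 0" using ordp order_linear_if[of p p] by simp
  then have Qp: "poly Q p \<noteq> 0" using order_root[of Q p] Q(2) by simp
  have Qneg: "x < 0" if "poly Q x = 0" for x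
  proof -
    have "poly P x = 0" using that Q(1) by simp
    moreover have "x \<noteq> 0" using nz \<open>poly P x = 0\<close> by auto
    moreover have "x \<noteq> p" using that Qp by auto
    ultimately show ?thesis using uniq Pos_def by fastforce
  qed
  define c where "c k = coeff Q k" for k
  have a0: "coeff P 0 = -p * c 0" unfolding Q(1) c_def by (simp add: coeff_lin_mult)
  have aS: "coeff P (Suc k) = -p * c (Suc k) + c k" for k unfolding Q(1) c_def by (simp add: coeff_lin_mult)
  have cm: "c m = 1"
  proof -
    have "c (Suc m) = 0" unfolding c_def using dQ by (simp add: coeff_eq_0)
    then show ?thesis using aS[of m] lP nm by simp
  qed
  have cpos: "c k > 0" if "k \<le> m" for k
  proof -
    obtain c0 rs where Qr: "Q = Polynomial.smult c0 (\<Prod>r\<leftarrow>rs. [:-r,1:])" using rrQ rr_def by auto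
    have c00: "c0 \<noteq> 0" using Qr Q(2) by auto
    have rneg: "\<forall>r\<in>set rs. r < 0"
    proof
      fix r assume "r \<in> set rs"
      then have "poly Q r = 0" using Qr prod_lin_root by simp
      then show "r < 0" using Qneg by simp
    qed
    have len: "length rs = m" using dQ Qr c00 prod_lin_props[of rs] by simp
    have pc: "\<forall>k \<le> m. coeff (\<Prod>r\<leftarrow>rs. [:-r,1:]) k > 0" using pos_prod_coeffs[OF rneg] len by simp
    have "c0 * coeff (\<Prod>r\<leftarrow>rs. [:-r,1:]) m = 1" using cm Qr c_def by simp
    then have "c0 > 0" using pc by (metis less_numeral_extra(1) order.refl zero_less_mult_pos2)
    then show ?thesis using pc that Qr c_def by simp
  qed
  have strict: "c j * c (j+2) < c (j+1)^2" if "j + 2 \<le> m" for j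
  proof -
    have nw: "real (Suc (Suc j)) * c j * c (Suc (Suc j)) \<le> real (Suc j) * (c (Suc j))^2"
      using newton[OF rrQ, of j] c_def by simp
    have pos: "c j * c (Suc (Suc j)) > 0" using cpos that by simp
    have "real (Suc j) * (c j * c (Suc (Suc j))) < real (Suc (Suc j)) * (c j * c (Suc (Suc j)))"
      using pos by (intro mult_strict_right_mono) auto
    also have "\<dots> \<le> real (Suc j) * (c (Suc j))^2" using nw by (simp add: mult.assoc)
    finally have "c j * c (Suc (Suc j)) < (c (Suc j))^2"
      by (rule mult_left_less_imp_less) simp
    then show ?thesis by (simp add: numeral_2_eq_2)
  qed
  have tr: "coeff P (n - 1) = - mat_trace M" using char_poly_trace[OF Mc n1] P_def by simp
  have negs: "coeff P k < 0" if k: "k \<le> n - 2" and tr0: "mat_trace M \<ge> 0" for k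
  proof (cases k)
    case 0 then show ?thesis using a0 cpos[of 0] pp by (simp add: mult_pos_pos)
  next
    case (Suc j)
    have jm: "j < m - 1" using k Suc nm by simp
    define \<rho> where "\<rho> i = c i / c (Suc i)" for i
    have step: "\<rho> i < \<rho> (Suc i)" if "i < m - 1" for i
      unfolding \<rho>_def
      by (rule frac_less) (use that cpos strict[of i] in \<open>auto simp: power2_eq_square numeral_2_eq_2\<close>)
    have "\<rho> j < \<rho> (m - 1)" using chain_less[of "m - 1" \<rho> j] step jm by blast
    also have "\<rho> (m - 1) = c (m - 1)" using cm jm by (simp add: \<rho>_def)
    also have "c (m - 1) \<le> p"
    proof -
      have "coeff P (n - 1) = -p * c m + c (m - 1)" using aS[of "m - 1"] jm nm by simp
      then show ?thesis using tr tr0 cm by simp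
    qed
    finally have "c j / c (Suc j) < p" unfolding \<rho>_def .
    then have "c j < p * c (Suc j)" using cpos[of "Suc j"] jm by (simp add: divide_less_eq)
    then show ?thesis using aS[of j] Suc by simp
  qed
  show ?thesis
  proof (rule conjI; intro impI)
    assume "mat_trace M = 0"
    then show "log_concave_seq (\<lambda>k. \<bar>coeff (char_poly M) k\<bar>) (n - 2) \<and>
            unimodal_seq (\<lambda>k. \<bar>coeff (char_poly M) k\<bar>) (n - 2)"
      using finish[OF rrP, of "n - 2"] negs P_def by simp
  next
    assume t: "mat_trace M > 0"
    have "coeff P k < 0" if "k \<le> n - 1" for k
    proof (cases "k = n - 1")
      case True then show ?thesis using tr t by simp
    next
      case False then show ?thesis using negs[of k] that t by simp
    qed
    then show "log_concave_seq (\<lambda>k. \<bar>coeff (char_poly M) k\<bar>) (n - 1) \<and>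
            unimodal_seq (\<lambda>k. \<bar>coeff (char_poly M) k\<bar>) (n - 1)"
      using finish[OF rrP, of "n - 1"] P_def by simp
  qed
qed

end
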